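(* Let $G_1, G_2$ be two graphs on the same vertex set $V$. Let $A \subseteq S(G_2)$ and $B \subseteq V$ be such that $N_{G_1}(B) \cup N_{G_2}(B) \subseteq A$. Suppose $E(G_1) \triangle E(G_2) \subseteq \binom{A \cup B}{2}$. Then $S(G_1) \setminus B \subseteq S(G_2) \setminus B$.
   Context: For a graph $G$ and $X\subseteq V(G)$, $N_G(X)=\{x\in V(G)\setminus X: xy\in E(G)\text{ for some }y\in X\}$ and $N_G(x)=N_G(\{x\})$. The strong $4$-core $S(G)$ is the maximal set $X\subseteq V(G)$ such that $|N_G(x)\cap X|\ge 4$ for every $x\in X\cup N_G(X)$ (well-defined since the union of two such sets is again such a set). $\triangle$ denotes symmetric difference. *)

theory Defs
  imports Main
begin

definition graph :: "'a set \<Rightarrow> 'a set set \<Rightarrow> bool" where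
  "graph V E \<longleftrightarrow> finite V \<and> (\<forall>e\<in>E. e \<subseteq> V \<and> card e = 2)"

definition nbhd :: "'a set \<Rightarrow> 'a set set \<Rightarrow> 'a set \<Rightarrow> 'a set" where
  "nbhd V E X = {x \<in> V - X. \<exists>y\<in>X. {x, y} \<in> E}"

definition two_subsets :: "'a set \<Rightarrow> 'a set set" where
  "two_subsets A = {e. e \<subseteq> A \<and> card e = 2}"

definition strong4 :: "'a set \<Rightarrow> 'a set set \<Rightarrow> 'a set \<Rightarrow> bool" where
  "strong4 V E X \<longleftrightarrow> X \<subseteq> V \<and>
     (\<forall>x \<in> X \<union> nbhd V E X. card (nbhd V E {x} \<inter> X) \<ge> 4)"

text \<open>The strong 4-core: the maximal set with the property, i.e. the union
of all such sets (the union of such sets is again such a set).\<close>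
definition strong_core :: "'a set \<Rightarrow> 'a set set \<Rightarrow> 'a set" where
  "strong_core V E = \<Union> {X. strong4 V E X}"

end

theory Submission
  imports Defs
begin

theorem lemma4p4:
  fixes V :: "'a set" and E1 E2 :: "'a set set" and A B :: "'a set"
  assumes "graph V E1" and "graph V E2"
    and "A \<subseteq> strong_core V E2" and "B \<subseteq> V"
    and "nbhd V E1 B \<union> nbhd V E2 B \<subseteq> A"
    and "(E1 - E2) \<union> (E2 - E1) \<subseteq> two_subsets (A \<union> B)"
  shows "strong_core V E1 - B \<subseteq> strong_core V E2 - B"
proof -
  define S1 where "S1 = strong_core V E1"
  define S2 where "S2 = strong_core V E2"
  define X where "X = (S1 - B) \<union> S2"
  have finV: "finite V" using assms(1) by (simp add: graph_def)
  have S1V: "S1 \<subseteq> V" unfolding S1_def strong_core_def strong4_def by blast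
  have S2V: "S2 \<subseteq> V" unfolding S2_def strong_core_def strong4_def by blast
  have XV: "X \<subseteq> V" using S1V S2V X_def by blast
  have AS2: "A \<subseteq> S2" using assms(3) S2_def by simp
  have "strong4 V E2 X"
    unfolding strong4_def
  proof (intro conjI XV ballI)
    fix x assume xX: "x \<in> X \<union> nbhd V E2 X"
    have xV: "x \<in> V" using xX XV unfolding nbhd_def by blast
    have fin: "finite (nbhd V E2 {x} \<inter> X)" using finV XV by (meson finite_Int finite_subset)
    show "4 \<le> card (nbhd V E2 {x} \<inter> X)"
    proof (cases "x \<in> S2 \<or> (\<exists>y\<in>S2. {x,y} \<in> E2)")
      case True
      then obtain Y where Y: "strong4 V E2 Y" "x \<in> Y \<union> nbhd V E2 Y"
      proof
        assume "x \<in> S2"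
        then show ?thesis using that unfolding S2_def strong_core_def by blast
      next
        assume "\<exists>y\<in>S2. {x,y} \<in> E2"
        then obtain y Y where "y \<in> Y" "strong4 V E2 Y" "{x,y} \<in> E2"
          unfolding S2_def strong_core_def by blast
        then show ?thesis using that[of Y] xV unfolding nbhd_def by blast
      qed
      have YX: "Y \<subseteq> X" using Y(1) unfolding X_def S2_def strong_core_def by blast
      have "4 \<le> card (nbhd V E2 {x} \<inter> Y)" using Y unfolding strong4_def by blast
      also have "\<dots> \<le> card (nbhd V E2 {x} \<inter> X)" using fin YX by (intro card_mono) auto
      finally show ?thesis .
    next
      case False
      hence xnS2: "x \<notin> S2" and noadj: "\<And>y. y \<in> S2 \<Longrightarrow> {x,y} \<notin> E2" by auto
      have xnA: "x \<notin> A" using xnS2 AS2 by blast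
      have xnB: "x \<notin> B"
      proof
        assume xB: "x \<in> B"
        from xX have "x \<in> S1 - B \<or> (\<exists>y\<in>S1 - B. {y,x} \<in> E2 \<and> y \<in> V)"
          using xnS2 noadj S1V S2V unfolding X_def nbhd_def by (auto simp: insert_commute)
        with xB obtain y where "y \<in> S1 - B" "{y,x} \<in> E2" "y \<in> V" by blast
        hence "y \<in> nbhd V E2 B" using xB unfolding nbhd_def by blast
        hence "y \<in> S2" using assms(5) AS2 by blast
        with noadj[of y] \<open>{y,x} \<in> E2\<close> show False by (metis insert_commute)
      qed
      have same: "\<And>z. {z,x} \<in> E1 \<longleftrightarrow> {z,x} \<in> E2"
      proof -
        fix z
        show "{z,x} \<in> E1 \<longleftrightarrow> {z,x} \<in> E2"
        proof (rule ccontr)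
          assume "\<not> ?thesis"
          hence "{z,x} \<in> (E1 - E2) \<union> (E2 - E1)" by blast
          hence "{z,x} \<subseteq> A \<union> B" using assms(6) unfolding two_subsets_def by blast
          thus False using xnA xnB by blast
        qed
      qed
      have nb: "nbhd V E1 {x} = nbhd V E2 {x}" unfolding nbhd_def using same by auto
      have "x \<in> S1 \<or> (\<exists>y\<in>S1. {x,y} \<in> E1)"
      proof -
        from xX have "x \<in> S1 - B \<or> (\<exists>y\<in>S1 - B. {y,x} \<in> E2)"
          using xnS2 noadj S1V S2V unfolding X_def nbhd_def by (auto simp: insert_commute)
        thus ?thesis using same by (auto simp: insert_commute)
      qed
      then obtain Y where Y: "strong4 V E1 Y" "x \<in> Y \<union> nbhd V E1 Y"
      proof
        assume "x \<in> S1"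
        then show ?thesis using that unfolding S1_def strong_core_def by blast
      next
        assume "\<exists>y\<in>S1. {x,y} \<in> E1"
        then obtain y Y where "y \<in> Y" "strong4 V E1 Y" "{x,y} \<in> E1"
          unfolding S1_def strong_core_def by blast
        then show ?thesis using that[of Y] xV unfolding nbhd_def by blast
      qed
      have YS1: "Y \<subseteq> S1" using Y(1) unfolding S1_def strong_core_def by blast
      have sub: "nbhd V E1 {x} \<inter> Y \<subseteq> nbhd V E2 {x} \<inter> X"
      proof
        fix z assume z: "z \<in> nbhd V E1 {x} \<inter> Y"
        have "z \<notin> B"
        proof
          assume "z \<in> B"
          hence "x \<in> nbhd V E1 B" using z xV xnB unfolding nbhd_def by (auto simp: insert_commute)
          thus False using assms(5) xnA by blast
        qed
        thus "z \<in> nbhd V E2 {x} \<inter> X" using z nb YS1 unfolding X_def by auto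
      qed
      have "4 \<le> card (nbhd V E1 {x} \<inter> Y)" using Y unfolding strong4_def by blast
      also have "\<dots> \<le> card (nbhd V E2 {x} \<inter> X)" using fin sub by (intro card_mono) auto
      finally show ?thesis .
    qed
  qed
  hence "X \<subseteq> S2" unfolding S2_def strong_core_def by blast
  thus ?thesis unfolding S1_def[symmetric] S2_def[symmetric] X_def by blast
qed

end
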